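(* Let $\mathbb{X}$ be a reflexive Kadets-Klee real Banach space and $\mathbb{Y}$ any real Banach space (both of dimension greater than $1$). Let $T\in\mathbb{K}(\mathbb{X},\mathbb{Y})$ with $\|T\|=1$ be a smooth point of $\mathbb{K}(\mathbb{X},\mathbb{Y})$. Then for each $\epsilon>0$, $T$ admits a uniform $\epsilon$-BPB approximation $A\in\mathbb{L}(\mathbb{X},\mathbb{Y})$ with $A\neq T$.
   Context: $\mathbb{K}(\mathbb{X},\mathbb{Y})$ (resp. $\mathbb{L}(\mathbb{X},\mathbb{Y})$) denotes the compact (resp. bounded) linear operators with the operator norm; $S_{\mathbb{X}}$ is the unit sphere. $\mathbb{X}$ is Kadets-Klee if $x_n\to x$ weakly and $\|x_n\|\to\|x\|$ imply $\|x_n-x\|\to0$. A nonzero element $x$ of a Banach space $\mathbb{Z}$ is a smooth point if there is a unique $f\in\mathbb{Z}^*$ with $\|f\|=1$ and $f(x)=\|x\|$. For $T$ with $\|T\|=1$ and fixed $\epsilon>0$, an operator $A\in\mathbb{L}(\mathbb{X},\mathbb{Y})$ with $\|A\|=1$ is a uniform $\epsilon$-BPB approximation of $T$ if there exists $\delta(\epsilon)>0$ such that whenever $x_0\in S_{\mathbb{X}}$ satisfies $\|Tx_0\|>1-\delta(\epsilon)$, there exists $u_0\in S_{\mathbb{X}}$ with $\|Au_0\|=1$, $\|u_0-x_0\|<\epsilon$ and $\|A-T\|<\epsilon$. Such an $A$ is called nontrivial if $A\neq T$. *)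

theory Defs
  imports "HOL-Analysis.Analysis"
begin

definition compact_op :: "('a::real_normed_vector \<Rightarrow>\<^sub>L 'b::real_normed_vector) \<Rightarrow> bool" where
  "compact_op T \<longleftrightarrow> compact (closure (blinfun_apply T ` cball 0 1))"

definition reflexive_space :: "'a::real_normed_vector itself \<Rightarrow> bool" where
  "reflexive_space _ \<longleftrightarrow>
     (\<forall>\<phi> :: ('a \<Rightarrow>\<^sub>L real) \<Rightarrow>\<^sub>L real. \<exists>x::'a. \<forall>f. blinfun_apply \<phi> f = blinfun_apply f x)"

definition weakly_tendsto :: "(nat \<Rightarrow> 'a::real_normed_vector) \<Rightarrow> 'a \<Rightarrow> bool" where
  "weakly_tendsto xs x \<longleftrightarrow>
     (\<forall>f :: 'a \<Rightarrow>\<^sub>L real. (\<lambda>n. blinfun_apply f (xs n)) \<longlonglongrightarrow> blinfun_apply f x)"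

definition kadets_klee :: "'a::real_normed_vector itself \<Rightarrow> bool" where
  "kadets_klee _ \<longleftrightarrow>
     (\<forall>(xs :: nat \<Rightarrow> 'a) x. weakly_tendsto xs x \<and> (\<lambda>n. norm (xs n)) \<longlonglongrightarrow> norm x
        \<longrightarrow> (\<lambda>n. norm (xs n - x)) \<longlonglongrightarrow> 0)"

definition dim_gt_one :: "'a::real_vector itself \<Rightarrow> bool" where
  "dim_gt_one _ \<longleftrightarrow> (\<exists>x y :: 'a. \<forall>a b. a *\<^sub>R x + b *\<^sub>R y = 0 \<longrightarrow> a = 0 \<and> b = 0)"

definition support_functional :: "'v::real_normed_vector set \<Rightarrow> 'v \<Rightarrow> ('v \<Rightarrow> real) \<Rightarrow> bool" where
  "support_functional S z f \<longleftrightarrow>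
     (\<forall>u\<in>S. \<forall>v\<in>S. \<forall>a b. f (a *\<^sub>R u + b *\<^sub>R v) = a * f u + b * f v) \<and>
     (\<forall>u\<in>S. \<bar>f u\<bar> \<le> norm u) \<and> f z = norm z"

definition smooth_point_in :: "'v::real_normed_vector set \<Rightarrow> 'v \<Rightarrow> bool" where
  "smooth_point_in S z \<longleftrightarrow> z \<in> S \<and> z \<noteq> 0 \<and>
     (\<exists>f. support_functional S z f) \<and>
     (\<forall>f g. support_functional S z f \<and> support_functional S z g \<longrightarrow> (\<forall>u\<in>S. f u = g u))"

definition uniform_BPB_approx ::
    "('a::real_normed_vector \<Rightarrow>\<^sub>L 'b::real_normed_vector) \<Rightarrow> real \<Rightarrow> ('a \<Rightarrow>\<^sub>L 'b) \<Rightarrow> bool" where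
  "uniform_BPB_approx T \<epsilon> A \<longleftrightarrow> norm A = 1 \<and>
     (\<exists>\<delta>>0. \<forall>x0. norm x0 = 1 \<and> norm (blinfun_apply T x0) > 1 - \<delta> \<longrightarrow>
        (\<exists>u0. norm u0 = 1 \<and> norm (blinfun_apply A u0) = 1 \<and> norm (u0 - x0) < \<epsilon> \<and> norm (A - T) < \<epsilon>))"

end

theory Submission
  imports Defs
begin

definition lcg :: "('v::real_normed_vector \<times> real) set \<Rightarrow> bool" where
  "lcg G \<longleftrightarrow> (\<forall>u a v b s t. (u,a)\<in>G \<longrightarrow> (v,b)\<in>G \<longrightarrow> (s *\<^sub>R u + t *\<^sub>R v, s*a + t*b) \<in> G)"
definition domg :: "('v::real_normed_vector \<times> real) set \<Rightarrow> bool" where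
  "domg G \<longleftrightarrow> (\<forall>u a. (u,a)\<in>G \<longrightarrow> a \<le> norm u)"

lemma lcgD: "lcg G \<Longrightarrow> (u,a)\<in>G \<Longrightarrow> (v,b)\<in>G \<Longrightarrow> (s *\<^sub>R u + t *\<^sub>R v, s*a + t*b) \<in> G"
  unfolding lcg_def by blast

lemma lcg_scale: "lcg G \<Longrightarrow> (u,a)\<in>G \<Longrightarrow> (s *\<^sub>R u, s*a) \<in> G"
  using lcgD[of G u a u a s 0] by simp

lemma hb_extend:
  fixes M :: "('v::real_normed_vector \<times> real) set"
  assumes lc: "lcg M" and dm: "domg M" and z: "(0,0) \<in> M" and nv: "\<forall>c. (v0,c) \<notin> M"
  shows "\<exists>M'. lcg M' \<and> domg M' \<and> M \<subseteq> M' \<and> M' \<noteq> M"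
proof -
  define D where "D = {a - norm (u - v0) | u a. (u,a)\<in>M}"
  define c where "c = Sup D"
  have key: "a - norm (u - v0) \<le> norm (w + v0) - b" if "(u,a)\<in>M" "(w,b)\<in>M" for u a w b
  proof -
    have "(u + w, a + b) \<in> M" using lcgD[OF lc that, of 1 1] by simp
    hence "a + b \<le> norm (u + w)" using dm domg_def by blast
    also have "u + w = (u - v0) + (w + v0)" by simp
    also have "norm \<dots> \<le> norm (u - v0) + norm (w + v0)" by (rule norm_triangle_ineq)
    finally show ?thesis by simp
  qed
  have Dne: "D \<noteq> {}" using z D_def by blast
  have Dbd: "bdd_above D" unfolding D_def bdd_above_def using key z by blast
  have cup: "a - norm (u - v0) \<le> c" if "(u,a)\<in>M" for u a
    unfolding c_def using Dbd that D_def by (auto intro!: cSup_upper)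
  have clo: "c \<le> norm (w + v0) - b" if "(w,b)\<in>M" for w b
    unfolding c_def using Dne key that D_def by (auto intro!: cSup_least)
  define M' where "M' = {(u + t *\<^sub>R v0, a + t*c) | u a t. (u,a)\<in>M}"
  have "lcg M'" unfolding lcg_def M'_def
  proof (clarify)
    fix u1 a1 t1 u2 a2 t2 s t
    assume h: "(u1,a1)\<in>M" "(u2,a2)\<in>M"
    have "(s *\<^sub>R u1 + t *\<^sub>R u2, s*a1 + t*a2) \<in> M" using lcgD[OF lc h] .
    moreover have "s *\<^sub>R (u1 + t1 *\<^sub>R v0) + t *\<^sub>R (u2 + t2 *\<^sub>R v0) = (s *\<^sub>R u1 + t *\<^sub>R u2) + (s*t1 + t*t2) *\<^sub>R v0"
      by (simp add: algebra_simps)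
    moreover have "s * (a1 + t1 * c) + t * (a2 + t2 * c) = (s*a1 + t*a2) + (s*t1 + t*t2) * c"
      by (simp add: algebra_simps)
    ultimately show "\<exists>u a ta. (s *\<^sub>R (u1 + t1 *\<^sub>R v0) + t *\<^sub>R (u2 + t2 *\<^sub>R v0),
        s * (a1 + t1 * c) + t * (a2 + t2 * c)) = (u + ta *\<^sub>R v0, a + ta * c) \<and> (u, a) \<in> M"
      by (intro exI[of _ "s *\<^sub>R u1 + t *\<^sub>R u2"] exI[of _ "s*a1 + t*a2"] exI[of _ "s*t1 + t*t2"]) simp
  qed
  moreover have "domg M'" unfolding domg_def M'_def
  proof (clarify)
    fix u a t assume h: "(u,a)\<in>M"
    show "a + t * c \<le> norm (u + t *\<^sub>R v0)"
    proof (cases "t = 0")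
      case True thus ?thesis using h dm domg_def by auto
    next
      case False
      show ?thesis
      proof (cases "t > 0")
        case True
        have "(inverse t *\<^sub>R u, inverse t * a) \<in> M" using lcg_scale[OF lc h] .
        hence "c \<le> norm (inverse t *\<^sub>R u + v0) - inverse t * a" by (rule clo)
        hence "t * c \<le> t * (norm (inverse t *\<^sub>R u + v0) - inverse t * a)"
          using True by (simp add: mult_left_mono)
        also have "\<dots> = norm (t *\<^sub>R (inverse t *\<^sub>R u + v0)) - a" using True
          by (simp add: right_diff_distrib)
        also have "t *\<^sub>R (inverse t *\<^sub>R u + v0) = u + t *\<^sub>R v0" using True
          by (simp add: scaleR_add_right)
        finally show ?thesis by simp
      next
        case False
        hence tn: "t < 0" using \<open>t \<noteq> 0\<close> by simp
        define s where "s = - t"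
        have sp: "s > 0" using tn s_def by simp
        have "(inverse s *\<^sub>R u, inverse s * a) \<in> M" using lcg_scale[OF lc h] .
        hence "inverse s * a - norm (inverse s *\<^sub>R u - v0) \<le> c" by (rule cup)
        hence "s * (inverse s * a - norm (inverse s *\<^sub>R u - v0)) \<le> s * c"
          using sp by (simp add: mult_left_mono)
        moreover have "s * (inverse s * a) = a" using sp by simp
        moreover have "s * norm (inverse s *\<^sub>R u - v0) = norm (s *\<^sub>R (inverse s *\<^sub>R u - v0))"
          using sp by simp
        ultimately have "a - norm (s *\<^sub>R (inverse s *\<^sub>R u - v0)) \<le> s * c"
          by (simp add: right_diff_distrib)
        also have "s *\<^sub>R (inverse s *\<^sub>R u - v0) = u + t *\<^sub>R v0" using sp s_def
          by (simp add: scaleR_diff_right)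
        finally show ?thesis using s_def by simp
      qed
    qed
  qed
  moreover have "M \<subseteq> M'" unfolding M'_def
  proof clarify
    fix u a assume "(u,a)\<in>M"
    thus "\<exists>u' a' t. (u, a) = (u' + t *\<^sub>R v0, a' + t * c) \<and> (u', a') \<in> M"
      by (intro exI[of _ u] exI[of _ a] exI[of _ 0]) simp
  qed
  moreover have "(v0, c) \<in> M'" unfolding M'_def using z
    by (intro CollectI exI[of _ 0] exI[of _ 0] exI[of _ 1]) simp
  ultimately show ?thesis using nv by blast
qed

lemma hahn_banach_norming:
  fixes y :: "'v::real_normed_vector"
  shows "\<exists>g::'v \<Rightarrow>\<^sub>L real. norm g \<le> 1 \<and> blinfun_apply g y = norm y"
proof -
  define A where "A = {G::('v\<times>real) set. lcg G \<and> domg G \<and> (y, norm y) \<in> G}"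
  define G0 where "G0 = {(t *\<^sub>R y, t * norm y) | t. True}"
  have G0A: "G0 \<in> A"
  proof -
    have "lcg G0" unfolding lcg_def G0_def
    proof clarify
      fix s t t1 t2
      have "s *\<^sub>R t1 *\<^sub>R y + t *\<^sub>R t2 *\<^sub>R y = (s*t1 + t*t2) *\<^sub>R y" by (simp add: algebra_simps)
      moreover have "s * (t1 * norm y) + t * (t2 * norm y) = (s*t1+t*t2) * norm y" by (simp add: algebra_simps)
      ultimately show "\<exists>ta. (s *\<^sub>R t1 *\<^sub>R y + t *\<^sub>R t2 *\<^sub>R y, s * (t1 * norm y) + t * (t2 * norm y)) =
          (ta *\<^sub>R y, ta * norm y) \<and> True" by metis
    qed
    moreover have "domg G0" unfolding domg_def G0_def by (auto intro!: mult_right_mono)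
    moreover have "(y, norm y) \<in> G0" unfolding G0_def by (auto intro!: exI[of _ 1])
    ultimately show ?thesis unfolding A_def by blast
  qed
  have "\<forall>C\<in>chains A. \<exists>U\<in>A. \<forall>X\<in>C. X \<subseteq> U"
  proof
    fix C assume C: "C \<in> chains A"
    show "\<exists>U\<in>A. \<forall>X\<in>C. X \<subseteq> U"
    proof (cases "C = {}")
      case True thus ?thesis using G0A by blast
    next
      case False
      have sub: "C \<subseteq> A" using chainsD2[OF C] .
      have "lcg (\<Union>C)" unfolding lcg_def
      proof (intro allI impI)
        fix u a v b s t assume "(u,a) \<in> \<Union>C" "(v,b) \<in> \<Union>C"
        then obtain X1 X2 where X: "X1\<in>C" "X2\<in>C" "(u,a)\<in>X1" "(v,b)\<in>X2" by blast
        from chainsD[OF C X(1,2)] obtain X where "X\<in>C" "(u,a)\<in>X" "(v,b)\<in>X" using X by blast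
        moreover have "lcg X" using sub \<open>X\<in>C\<close> A_def by blast
        ultimately show "(s *\<^sub>R u + t *\<^sub>R v, s*a + t*b) \<in> \<Union>C" using lcgD by blast
      qed
      moreover have "domg (\<Union>C)" using sub unfolding domg_def A_def by blast
      moreover have "(y, norm y) \<in> \<Union>C" using sub False A_def by blast
      ultimately show ?thesis unfolding A_def by blast
    qed
  qed
  from Zorn_Lemma2[OF this] obtain M where MA: "M \<in> A" and mx: "\<forall>X\<in>A. M \<subseteq> X \<longrightarrow> X = M" by blast
  have lc: "lcg M" and dm: "domg M" and yM: "(y, norm y) \<in> M" using MA A_def by auto
  have z: "(0,0) \<in> M" using lcg_scale[OF lc yM, of 0] by simp
  have tot: "\<exists>a. (v,a) \<in> M" for v
  proof (rule ccontr)
    assume "\<not> ?thesis"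
    then obtain M' where "lcg M'" "domg M'" "M \<subseteq> M'" "M' \<noteq> M"
      using hb_extend[OF lc dm z] by blast
    moreover have "M' \<in> A" using calculation yM A_def by blast
    ultimately show False using mx by blast
  qed
  have uniq: "a = b" if "(v,a)\<in>M" "(v,b)\<in>M" for v a b
  proof -
    have "(0, a - b) \<in> M" using lcgD[OF lc that, of 1 "-1"] by simp
    hence "a - b \<le> 0" using dm domg_def by fastforce
    moreover have "(0, b - a) \<in> M" using lcgD[OF lc that(2) that(1), of 1 "-1"] by simp
    hence "b - a \<le> 0" using dm domg_def by fastforce
    ultimately show ?thesis by simp
  qed
  define g where "g v = (SOME a. (v,a) \<in> M)" for v
  have gM: "(v, g v) \<in> M" for v unfolding g_def using tot someI_ex by metis
  have gadd: "g (u + v) = g u + g v" for u v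
    using lcgD[OF lc gM[of u] gM[of v], of 1 1] gM[of "u+v"] uniq by simp
  have gscale: "g (r *\<^sub>R u) = r *\<^sub>R g u" for r u
    using lcg_scale[OF lc gM[of u], of r] gM[of "r *\<^sub>R u"] uniq by simp
  have gle: "g v \<le> norm v" for v using gM dm domg_def by blast
  have gabs: "norm (g v) \<le> norm v * 1" for v
  proof -
    have "- g v = g (-v)" using gscale[of "-1" v] by simp
    also have "\<dots> \<le> norm v" using gle[of "-v"] by simp
    finally show ?thesis using gle[of v] by simp
  qed
  have bl: "bounded_linear g" by (rule bounded_linear_intro[OF gadd gscale gabs])
  have "norm (Blinfun g) \<le> 1"
    by (rule norm_blinfun_bound) (use gabs bounded_linear_Blinfun_apply[OF bl] in auto)
  moreover have "blinfun_apply (Blinfun g) y = norm y" using bounded_linear_Blinfun_apply[OF bl] uniq[OF yM gM] by simp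
  ultimately show ?thesis by blast
qed

definition ufam :: "nat set set \<Rightarrow> bool" where
  "ufam U \<longleftrightarrow> (\<forall>P Q. P \<in> U \<longrightarrow> Q \<in> U \<longrightarrow> P \<inter> Q \<in> U) \<and> (\<forall>P Q. P \<in> U \<longrightarrow> P \<subseteq> Q \<longrightarrow> Q \<in> U)
     \<and> {} \<notin> U \<and> (\<forall>n. {n..} \<in> U)"

lemma ufam_int: "ufam U \<Longrightarrow> P \<in> U \<Longrightarrow> Q \<in> U \<Longrightarrow> P \<inter> Q \<in> U" unfolding ufam_def by blast
lemma ufam_mono: "ufam U \<Longrightarrow> P \<in> U \<Longrightarrow> P \<subseteq> Q \<Longrightarrow> Q \<in> U" unfolding ufam_def by blast
lemma ufam_empty: "ufam U \<Longrightarrow> {} \<notin> U" unfolding ufam_def by blast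
lemma ufam_tail: "ufam U \<Longrightarrow> {n..} \<in> U" unfolding ufam_def by blast

lemma ultra_exists:
  "\<exists>F::nat filter. F \<noteq> bot \<and> F \<le> sequentially \<and> (\<forall>P. eventually P F \<or> eventually (\<lambda>n. \<not> P n) F)"
proof -
  define A where "A = {U. ufam U}"
  define U0 where "U0 = {P::nat set. \<exists>n. {n..} \<subseteq> P}"
  have U0A: "U0 \<in> A"
  proof -
    have "P \<inter> Q \<in> U0" if pq: "P \<in> U0" "Q \<in> U0" for P Q
    proof -
      obtain m n :: nat where "{m..} \<subseteq> P" "{n..} \<subseteq> Q" using pq U0_def by auto
      hence "{max m n..} \<subseteq> P \<inter> Q" by auto
      thus ?thesis unfolding U0_def by blast
    qed
    moreover have "Q \<in> U0" if "P \<in> U0" "P \<subseteq> Q" for P Q using that U0_def by blast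
    moreover have "{} \<notin> U0" unfolding U0_def by auto
    moreover have "{n..} \<in> U0" for n unfolding U0_def by auto
    ultimately show ?thesis unfolding A_def ufam_def by blast
  qed
  have "\<forall>C\<in>chains A. \<exists>U\<in>A. \<forall>X\<in>C. X \<subseteq> U"
  proof
    fix C assume C: "C \<in> chains A"
    show "\<exists>U\<in>A. \<forall>X\<in>C. X \<subseteq> U"
    proof (cases "C = {}")
      case True thus ?thesis using U0A by blast
    next
      case False
      have sub: "C \<subseteq> A" using chainsD2[OF C] .
      have "ufam (\<Union>C)" unfolding ufam_def
      proof (intro conjI allI impI)
        fix P Q assume "P \<in> \<Union>C" "Q \<in> \<Union>C"
        then obtain X1 X2 where X: "X1\<in>C" "X2\<in>C" "P\<in>X1" "Q\<in>X2" by blast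
        from chainsD[OF C X(1,2)] obtain X where "X\<in>C" "P\<in>X" "Q\<in>X" using X by blast
        moreover have "ufam X" using sub \<open>X\<in>C\<close> A_def by blast
        ultimately show "P \<inter> Q \<in> \<Union>C" using ufam_int by blast
      next
        fix P Q assume "P \<in> \<Union>C" "P \<subseteq> Q"
        then obtain X where "X \<in> C" "P \<in> X" by blast
        moreover have "ufam X" using sub \<open>X\<in>C\<close> A_def by blast
        ultimately show "Q \<in> \<Union>C" using ufam_mono \<open>P \<subseteq> Q\<close> by blast
      next
        have "\<forall>X\<in>C. ufam X" using sub A_def by blast
        thus "{} \<notin> \<Union>C" using ufam_empty by blast
      next
        fix n
        obtain X where "X \<in> C" using False by blast
        moreover have "ufam X" using sub \<open>X\<in>C\<close> A_def by blast
        ultimately show "{n..} \<in> \<Union>C" using ufam_tail by blast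
      qed
      thus ?thesis unfolding A_def by blast
    qed
  qed
  from Zorn_Lemma2[OF this] obtain M where MA: "M \<in> A" and mx: "\<forall>X\<in>A. M \<subseteq> X \<longrightarrow> X = M" by blast
  have uf: "ufam M" using MA A_def by blast
  have ultra: "P \<in> M \<or> - P \<in> M" for P
  proof (rule ccontr)
    assume nn: "\<not> (P \<in> M \<or> - P \<in> M)"
    have ne: "R \<inter> P \<noteq> {}" if "R \<in> M" for R
    proof
      assume "R \<inter> P = {}"
      hence "R \<subseteq> - P" by blast
      thus False using ufam_mono[OF uf that] nn by blast
    qed
    define M' where "M' = {Q. \<exists>R\<in>M. R \<inter> P \<subseteq> Q}"
    have "ufam M'" unfolding ufam_def M'_def
    proof (intro conjI allI impI)
      fix Q1 Q2 assume "Q1 \<in> {Q. \<exists>R\<in>M. R \<inter> P \<subseteq> Q}" "Q2 \<in> {Q. \<exists>R\<in>M. R \<inter> P \<subseteq> Q}"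
      then obtain R1 R2 where "R1 \<in> M" "R2 \<in> M" "R1 \<inter> P \<subseteq> Q1" "R2 \<inter> P \<subseteq> Q2" by auto
      moreover have "R1 \<inter> R2 \<in> M" using ufam_int[OF uf] calculation by blast
      ultimately show "Q1 \<inter> Q2 \<in> {Q. \<exists>R\<in>M. R \<inter> P \<subseteq> Q}" by blast
    next
      fix Q1 Q2 assume "Q1 \<in> {Q. \<exists>R\<in>M. R \<inter> P \<subseteq> Q}" "Q1 \<subseteq> Q2"
      thus "Q2 \<in> {Q. \<exists>R\<in>M. R \<inter> P \<subseteq> Q}" by blast
    next
      show "{} \<notin> {Q. \<exists>R\<in>M. R \<inter> P \<subseteq> Q}" using ne by blast
    next
      fix n show "{n..} \<in> {Q. \<exists>R\<in>M. R \<inter> P \<subseteq> Q}" using ufam_tail[OF uf, of n] by blast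
    qed
    moreover have "M \<subseteq> M'" unfolding M'_def by blast
    moreover have "P \<in> M'" unfolding M'_def using ufam_tail[OF uf, of 0] by blast
    ultimately show False using mx nn A_def by blast
  qed
  have isf: "is_filter (\<lambda>P. {n. P n} \<in> M)"
  proof
    show "{n. True} \<in> M" using ufam_tail[OF uf, of 0] by (simp add: UNIV_def[symmetric])
  next
    fix P Q :: "nat \<Rightarrow> bool" assume "{n. P n} \<in> M" "{n. Q n} \<in> M"
    hence "{n. P n} \<inter> {n. Q n} \<in> M" using ufam_int[OF uf] by blast
    thus "{n. P n \<and> Q n} \<in> M" by (simp add: Collect_conj_eq)
  next
    fix P Q :: "nat \<Rightarrow> bool" assume "\<forall>x. P x \<longrightarrow> Q x" "{n. P n} \<in> M"
    thus "{n. Q n} \<in> M" using ufam_mono[OF uf] by (metis (no_types, lifting) mem_Collect_eq subsetI)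
  qed
  define F where "F = Abs_filter (\<lambda>P. {n. P n} \<in> M)"
  have ev: "eventually P F \<longleftrightarrow> {n. P n} \<in> M" for P
    unfolding F_def eventually_Abs_filter[OF isf] ..
  have "F \<noteq> bot" using ev[of "\<lambda>_. False"] ufam_empty[OF uf] by (auto simp: trivial_limit_def)
  moreover have "F \<le> sequentially" unfolding le_filter_def eventually_sequentially ev
  proof (intro allI impI)
    fix P :: "nat \<Rightarrow> bool" assume "\<exists>N. \<forall>n\<ge>N. P n"
    then obtain N where "\<forall>n\<ge>N. P n" by blast
    hence "{N..} \<subseteq> {n. P n}" by auto
    thus "{n. P n} \<in> M" using ufam_mono[OF uf ufam_tail[OF uf]] by blast
  qed
  moreover have "\<forall>P. eventually P F \<or> eventually (\<lambda>n. \<not> P n) F"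
    unfolding ev using ultra by (metis Collect_neg_eq)
  ultimately show ?thesis by blast
qed

lemma ultra_lim:
  fixes F :: "nat filter" and s :: "nat \<Rightarrow> real"
  assumes nb: "F \<noteq> bot" and ul: "\<forall>P. eventually P F \<or> eventually (\<lambda>n. \<not> P n) F"
    and bd: "\<forall>n. \<bar>s n\<bar> \<le> B"
  shows "\<exists>L. (s \<longlongrightarrow> L) F"
proof -
  define D where "D = {a. eventually (\<lambda>n. a \<le> s n) F}"
  have Dne: "- B \<in> D" unfolding D_def using bd by (auto intro!: always_eventually) (meson abs_le_D2 minus_le_iff)
  have Dbd: "a \<le> B" if "a \<in> D" for a
  proof (rule ccontr)
    assume "\<not> a \<le> B"
    have "eventually (\<lambda>n. a \<le> s n) F" using that D_def by blast
    hence "eventually (\<lambda>n. False) F"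
      by (rule eventually_mono) (use bd \<open>\<not> a \<le> B\<close> in \<open>meson abs_le_D1 order_trans\<close>)
    thus False using nb by (simp add: trivial_limit_def)
  qed
  have bdd: "bdd_above D" using Dbd by (auto simp: bdd_above_def)
  define L where "L = Sup D"
  have "(s \<longlongrightarrow> L) F"
    unfolding order_tendsto_iff
  proof (intro conjI allI impI)
    fix a assume "a < L"
    then obtain a' where "a' \<in> D" "a < a'" using less_cSup_iff[of D a] Dne bdd L_def by blast
    thus "eventually (\<lambda>n. a < s n) F" unfolding D_def by (auto elim: eventually_mono)
  next
    fix a assume "L < a"
    define b where "b = (L + a) / 2"
    have "b \<notin> D"
    proof
      assume "b \<in> D" hence "b \<le> L" using cSup_upper[OF _ bdd] L_def by blast
      thus False using \<open>L < a\<close> b_def by simp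
    qed
    hence "eventually (\<lambda>n. \<not> b \<le> s n) F" using ul D_def by blast
    thus "eventually (\<lambda>n. s n < a) F"
      by (rule eventually_mono) (use \<open>L < a\<close> b_def in auto)
  qed
  thus ?thesis by blast
qed

lemma weak_ulim:
  fixes xs :: "nat \<Rightarrow> 'a::real_normed_vector" and F :: "nat filter"
  assumes refl: "reflexive_space TYPE('a)" and nb: "F \<noteq> bot"
    and ul: "\<forall>P. eventually P F \<or> eventually (\<lambda>n. \<not> P n) F"
    and bd: "\<forall>n. norm (xs n) \<le> B"
  shows "\<exists>x::'a. \<forall>f::'a \<Rightarrow>\<^sub>L real. ((\<lambda>n. blinfun_apply f (xs n)) \<longlongrightarrow> blinfun_apply f x) F"
proof -
  have B0: "0 \<le> B" using bd norm_ge_zero order_trans by blast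
  have ex: "\<exists>L. ((\<lambda>n. blinfun_apply f (xs n)) \<longlongrightarrow> L) F" for f :: "'a \<Rightarrow>\<^sub>L real"
  proof -
    have "\<forall>n. \<bar>blinfun_apply f (xs n)\<bar> \<le> norm f * B"
    proof
      fix n
      have "\<bar>blinfun_apply f (xs n)\<bar> \<le> norm f * norm (xs n)" using norm_blinfun[of f "xs n"] by simp
      also have "\<dots> \<le> norm f * B" using bd by (simp add: mult_left_mono)
      finally show "\<bar>blinfun_apply f (xs n)\<bar> \<le> norm f * B" .
    qed
    thus ?thesis by (rule ultra_lim[OF nb ul])
  qed
  define \<phi> where "\<phi> f = Lim F (\<lambda>n. blinfun_apply f (xs n))" for f :: "'a \<Rightarrow>\<^sub>L real"
  have lim: "((\<lambda>n. blinfun_apply f (xs n)) \<longlongrightarrow> \<phi> f) F" for f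
  proof -
    obtain L where L: "((\<lambda>n. blinfun_apply f (xs n)) \<longlongrightarrow> L) F" using ex by blast
    have "\<phi> f = L" unfolding \<phi>_def using tendsto_Lim[OF nb L] .
    thus ?thesis using L by simp
  qed
  have add: "\<phi> (f + g) = \<phi> f + \<phi> g" for f g
  proof -
    have "((\<lambda>n. blinfun_apply (f + g) (xs n)) \<longlongrightarrow> \<phi> f + \<phi> g) F"
      using tendsto_add[OF lim[of f] lim[of g]] by (simp add: blinfun.add_left)
    thus ?thesis using tendsto_unique[OF nb lim[of "f+g"]] by blast
  qed
  have scl: "\<phi> (r *\<^sub>R f) = r *\<^sub>R \<phi> f" for r f
  proof -
    have "((\<lambda>n. blinfun_apply (r *\<^sub>R f) (xs n)) \<longlongrightarrow> r * \<phi> f) F"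
      using tendsto_mult[OF tendsto_const[of r] lim[of f]] by (simp add: blinfun.scaleR_left)
    thus ?thesis using tendsto_unique[OF nb lim[of "r *\<^sub>R f"]] by simp
  qed
  have bnd: "norm (\<phi> f) \<le> norm f * B" for f
  proof -
    have "((\<lambda>n. \<bar>blinfun_apply f (xs n)\<bar>) \<longlongrightarrow> \<bar>\<phi> f\<bar>) F" using tendsto_rabs[OF lim[of f]] .
    moreover have "eventually (\<lambda>n. \<bar>blinfun_apply f (xs n)\<bar> \<le> norm f * B) F"
    proof (rule always_eventually, rule allI)
      fix n
      have "\<bar>blinfun_apply f (xs n)\<bar> \<le> norm f * norm (xs n)" using norm_blinfun[of f "xs n"] by simp
      also have "\<dots> \<le> norm f * B" using bd by (simp add: mult_left_mono)
      finally show "\<bar>blinfun_apply f (xs n)\<bar> \<le> norm f * B" .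
    qed
    ultimately have "\<bar>\<phi> f\<bar> \<le> norm f * B" using tendsto_upperbound nb by blast
    thus ?thesis by simp
  qed
  have bl: "bounded_linear \<phi>" by (rule bounded_linear_intro[OF add scl bnd])
  obtain x :: 'a where hx: "\<forall>f. blinfun_apply (Blinfun \<phi>) f = blinfun_apply f x"
    using refl unfolding reflexive_space_def by blast
  have "\<phi> f = blinfun_apply f x" for f using hx bounded_linear_Blinfun_apply[OF bl] by metis
  thus ?thesis using lim by metis
qed

lemma separate:
  fixes y :: "'v::real_normed_vector"
  assumes "\<forall>g::'v \<Rightarrow>\<^sub>L real. blinfun_apply g y = 0"
  shows "y = 0"
  using hahn_banach_norming[of y] assms by force

definition rank1 :: "('a::real_normed_vector \<Rightarrow>\<^sub>L real) \<Rightarrow> 'b::real_normed_vector \<Rightarrow> ('a \<Rightarrow>\<^sub>L 'b)" where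
  "rank1 f w = Blinfun (\<lambda>x. blinfun_apply f x *\<^sub>R w)"

lemma rank1_apply: "blinfun_apply (rank1 f w) x = blinfun_apply f x *\<^sub>R w"
proof -
  have "bounded_linear (\<lambda>x. blinfun_apply f x *\<^sub>R w)"
    using bounded_linear_compose[OF bounded_linear_scaleR_left blinfun.bounded_linear_right] .
  thus ?thesis unfolding rank1_def by (simp add: bounded_linear_Blinfun_apply)
qed

lemma rank1_norm: "norm (rank1 f w) \<le> norm f * norm w"
proof (rule norm_blinfun_bound)
  show "0 \<le> norm f * norm w" by simp
  fix x
  have "norm (blinfun_apply (rank1 f w) x) = \<bar>blinfun_apply f x\<bar> * norm w" by (simp add: rank1_apply)
  also have "\<dots> \<le> (norm f * norm x) * norm w"
    using norm_blinfun[of f x] by (intro mult_right_mono) auto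
  finally show "norm (blinfun_apply (rank1 f w) x) \<le> norm f * norm w * norm x" by (simp add: algebra_simps)
qed

lemma rank1_compact: "compact_op (rank1 f w)"
proof -
  define K where "K = (\<lambda>t. t *\<^sub>R w) ` {- norm f .. norm f}"
  have cK: "compact K" unfolding K_def
    by (rule compact_continuous_image) (auto intro!: continuous_intros)
  have sub: "blinfun_apply (rank1 f w) ` cball 0 1 \<subseteq> K"
  proof
    fix z assume "z \<in> blinfun_apply (rank1 f w) ` cball 0 1"
    then obtain x where x: "norm x \<le> 1" "z = blinfun_apply f x *\<^sub>R w" by (auto simp: rank1_apply)
    have "\<bar>blinfun_apply f x\<bar> \<le> norm f * norm x" using norm_blinfun[of f x] by simp
    also have "\<dots> \<le> norm f" using x(1) mult_left_le[of "norm x" "norm f"] by simp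
    finally have "blinfun_apply f x \<in> {- norm f .. norm f}" by (simp add: abs_le_iff)
    thus "z \<in> K" unfolding K_def using x(2) by blast
  qed
  have "closure (blinfun_apply (rank1 f w) ` cball 0 1) \<subseteq> K"
    by (rule closure_minimal[OF sub compact_imp_closed[OF cK]])
  hence "closure (blinfun_apply (rank1 f w) ` cball 0 1) = K \<inter> closure (blinfun_apply (rank1 f w) ` cball 0 1)" by blast
  thus ?thesis unfolding compact_op_def using compact_Int_closed[OF cK closed_closure] by metis
qed

lemma approx_norming:
  fixes T :: "'a::real_normed_vector \<Rightarrow>\<^sub>L 'b::real_normed_vector"
  assumes "norm T = 1" "e > 0"
  shows "\<exists>x. norm x = 1 \<and> norm (blinfun_apply T x) > 1 - e"
proof (rule ccontr)
  assume "\<not> ?thesis"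
  hence h: "norm (blinfun_apply T x) \<le> 1 - e" if "norm x = 1" for x using that by force
  define e' where "e' = min e (1/2)"
  have e': "e' > 0" "e' \<le> e" "1 - e' \<ge> 0" using assms e'_def by auto
  have "norm T \<le> 1 - e'"
  proof (rule norm_blinfun_bound[OF e'(3)])
    fix x :: 'a
    show "norm (blinfun_apply T x) \<le> (1 - e') * norm x"
    proof (cases "x = 0")
      case True thus ?thesis by simp
    next
      case False
      have "norm (blinfun_apply T (x /\<^sub>R norm x)) \<le> 1 - e" using h[of "x /\<^sub>R norm x"] False by simp
      hence "norm (blinfun_apply T x) / norm x \<le> 1 - e" by (simp add: blinfun.scaleR_right divide_inverse mult.commute)
      hence "norm (blinfun_apply T x) / norm x \<le> 1 - e'" using e' by linarith
      thus ?thesis using False by (simp add: divide_le_eq)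
    qed
  qed
  thus False using assms e' by simp
qed

lemma perturb_unit:
  fixes w :: "'b::real_normed_vector"
  assumes dim: "dim_gt_one TYPE('b)" and w1: "norm w = 1" and ep: "\<epsilon> > 0"
  shows "\<exists>w'. norm w' = 1 \<and> w' \<noteq> w \<and> norm (w' - w) < \<epsilon>"
proof -
  obtain p q :: 'b where ind: "\<forall>a b. a *\<^sub>R p + b *\<^sub>R q = 0 \<longrightarrow> a = 0 \<and> b = 0"
    using dim unfolding dim_gt_one_def by blast
  have "\<exists>z. \<forall>c. z \<noteq> c *\<^sub>R w"
  proof (rule ccontr)
    assume "\<not> ?thesis"
    then obtain a b where ab: "p = a *\<^sub>R w" "q = b *\<^sub>R w" by metis
    show False
    proof (cases "a = 0 \<and> b = 0")
      case True thus False using ind[rule_format, of 1 0] ab by simp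
    next
      case False
      have "b *\<^sub>R p + (- a) *\<^sub>R q = 0" using ab by (simp add: algebra_simps)
      thus False using ind[rule_format, of b "-a"] False by simp
    qed
  qed
  then obtain z where z: "\<forall>c. z \<noteq> c *\<^sub>R w" by blast
  define m where "m = min (1/2) (\<epsilon>/4)"
  define t where "t = m / (norm z + 1)"
  have m: "m > 0" "m \<le> 1/2" "m \<le> \<epsilon>/4" using ep m_def by auto
  have t: "t > 0" unfolding t_def by (rule divide_pos_pos[OF m(1)]) (simp add: add_nonneg_pos)
  have tz: "t * norm z < m"
  proof -
    have "t * norm z = m * (norm z / (norm z + 1))" unfolding t_def by simp
    also have "\<dots> < m * 1"
    proof (intro mult_strict_left_mono)
      have "0 < norm z + 1" by (simp add: add_nonneg_pos)
      thus "norm z / (norm z + 1) < 1" by (simp add: divide_less_eq)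
    qed (use m in auto)
    finally show ?thesis by simp
  qed
  define v where "v = w + t *\<^sub>R z"
  have vw: "norm (v - w) < m" using tz t unfolding v_def by simp
  have "\<bar>norm v - norm w\<bar> \<le> norm (v - w)" by (rule norm_triangle_ineq3)
  hence nv: "\<bar>norm v - 1\<bar> < m" using vw w1 by simp
  hence vpos: "norm v > 0" using m by linarith
  define w' where "w' = v /\<^sub>R norm v"
  have "norm w' = 1" unfolding w'_def using vpos by simp
  moreover have "w' \<noteq> w"
  proof
    assume "w' = w"
    hence "v = norm v *\<^sub>R w" unfolding w'_def using vpos by (metis divideR_right less_irrefl)
    hence "t *\<^sub>R z = (norm v - 1) *\<^sub>R w" unfolding v_def by (simp add: algebra_simps)
    hence "z = ((norm v - 1) / t) *\<^sub>R w" using t by (metis (no_types, lifting) divideR_right less_irrefl scaleR_scaleR times_divide_eq_left mult.commute divide_inverse)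
    thus False using z by blast
  qed
  moreover have "norm (w' - w) < \<epsilon>"
  proof -
    have "w' - v = (1 / norm v - 1) *\<^sub>R v" unfolding w'_def by (simp add: algebra_simps inverse_eq_divide)
    hence "norm (w' - v) = \<bar>1 / norm v - 1\<bar> * norm v" by simp
    also have "\<dots> = \<bar>(1 / norm v - 1) * norm v\<bar>" by (simp add: abs_mult)
    also have "(1 / norm v - 1) * norm v = 1 - norm v" using vpos by (simp add: field_simps)
    finally have "norm (w' - v) < m" using nv by simp
    moreover have "norm (w' - w) \<le> norm (w' - v) + norm (v - w)"
      using norm_triangle_ineq[of "w' - v" "v - w"] by simp
    ultimately show ?thesis using vw m by linarith
  qed
  ultimately show ?thesis by blast
qed

context
  fixes T :: "'a::banach \<Rightarrow>\<^sub>L 'b::banach" and F :: "nat filter"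
  assumes refl: "reflexive_space TYPE('a)" and kk: "kadets_klee TYPE('a)"
    and cT: "compact_op T" and nT: "norm T = 1"
    and sm: "smooth_point_in {S. compact_op S} T"
    and nb: "F \<noteq> bot" and Fs: "F \<le> sequentially"
    and ul: "\<forall>P. eventually P F \<or> eventually (\<lambda>n. \<not> P n) F"
begin

lemma normT_le: "norm (blinfun_apply T x) \<le> norm x"
  using norm_blinfun[of T x] nT by simp

lemma K1:
  assumes xs: "\<forall>n. norm (xs n) \<le> 1" and lim: "(\<lambda>n. blinfun_apply T (xs n)) \<longlonglongrightarrow> y"
    and y1: "norm y = 1"
  shows "\<exists>x. norm x = 1 \<and> blinfun_apply T x = y \<and>
           (\<forall>f::'a \<Rightarrow>\<^sub>L real. ((\<lambda>n. blinfun_apply f (xs n)) \<longlongrightarrow> blinfun_apply f x) F)"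
proof -
  obtain x where wx: "\<forall>f::'a \<Rightarrow>\<^sub>L real. ((\<lambda>n. blinfun_apply f (xs n)) \<longlongrightarrow> blinfun_apply f x) F"
    using weak_ulim[OF refl nb ul, of xs 1] xs by blast
  have "\<forall>g::'b \<Rightarrow>\<^sub>L real. blinfun_apply g (blinfun_apply T x - y) = 0"
  proof
    fix g :: "'b \<Rightarrow>\<^sub>L real"
    have l1: "((\<lambda>n. blinfun_apply g (blinfun_apply T (xs n))) \<longlongrightarrow> blinfun_apply g (blinfun_apply T x)) F"
      using wx[rule_format, of "g o\<^sub>L T"] by simp
    have "((\<lambda>n. blinfun_apply g (blinfun_apply T (xs n))) \<longlonglongrightarrow> blinfun_apply g y)"
      using bounded_linear.tendsto[OF blinfun.bounded_linear_right lim] .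
    hence l2: "((\<lambda>n. blinfun_apply g (blinfun_apply T (xs n))) \<longlongrightarrow> blinfun_apply g y) F"
      using tendsto_mono[OF Fs] by blast
    have "blinfun_apply g (blinfun_apply T x) = blinfun_apply g y" using tendsto_unique[OF nb l1 l2] .
    thus "blinfun_apply g (blinfun_apply T x - y) = 0" by (simp add: blinfun.diff_right)
  qed
  hence "blinfun_apply T x - y = 0" by (rule separate)
  hence Txy: "blinfun_apply T x = y" by simp
  obtain h :: "'a \<Rightarrow>\<^sub>L real" where h: "norm h \<le> 1" "blinfun_apply h x = norm x"
    using hahn_banach_norming by blast
  have "eventually (\<lambda>n. blinfun_apply h (xs n) \<le> 1) F"
  proof (rule always_eventually, rule allI)
    fix n
    have "\<bar>blinfun_apply h (xs n)\<bar> \<le> norm h * norm (xs n)" using norm_blinfun[of h "xs n"] by simp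
    also have "\<dots> \<le> 1 * 1" using h(1) xs by (intro mult_mono) auto
    finally show "blinfun_apply h (xs n) \<le> 1" by simp
  qed
  hence "blinfun_apply h x \<le> 1" using tendsto_upperbound[OF wx[rule_format, of h]] nb by blast
  hence "norm x \<le> 1" using h by simp
  moreover have "1 \<le> norm x" using normT_le[of x] Txy y1 by simp
  ultimately have "norm x = 1" by linarith
  thus ?thesis using Txy wx by blast
qed

lemma U:
  assumes x1: "norm x1 = 1" "norm (blinfun_apply T x1) = 1"
    and x2: "norm x2 = 1" "norm (blinfun_apply T x2) = 1"
  shows "x2 = x1 \<or> x2 = - x1"
proof -
  obtain g1 :: "'b \<Rightarrow>\<^sub>L real" where g1: "norm g1 \<le> 1" "blinfun_apply g1 (blinfun_apply T x1) = 1"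
    using hahn_banach_norming[of "blinfun_apply T x1"] x1 by auto
  obtain g2 :: "'b \<Rightarrow>\<^sub>L real" where g2: "norm g2 \<le> 1" "blinfun_apply g2 (blinfun_apply T x2) = 1"
    using hahn_banach_norming[of "blinfun_apply T x2"] x2 by auto
  have sf: "support_functional {S. compact_op S} T (\<lambda>S. blinfun_apply g (blinfun_apply S x))"
    if g: "norm g \<le> 1" "blinfun_apply g (blinfun_apply T x) = 1" and x: "norm x = 1"
    for g :: "'b \<Rightarrow>\<^sub>L real" and x
    unfolding support_functional_def
  proof (intro conjI ballI allI)
    fix u v :: "'a \<Rightarrow>\<^sub>L 'b" and a b :: real
    show "blinfun_apply g (blinfun_apply (a *\<^sub>R u + b *\<^sub>R v) x) =
          a * blinfun_apply g (blinfun_apply u x) + b * blinfun_apply g (blinfun_apply v x)"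
      by (simp add: blinfun.add_left blinfun.scaleR_left blinfun.add_right blinfun.scaleR_right)
  next
    fix u :: "'a \<Rightarrow>\<^sub>L 'b"
    have "\<bar>blinfun_apply g (blinfun_apply u x)\<bar> \<le> norm g * norm (blinfun_apply u x)"
      using norm_blinfun[of g "blinfun_apply u x"] by simp
    also have "\<dots> \<le> 1 * (norm u * 1)"
      using g(1) norm_blinfun[of u x] x by (intro mult_mono) auto
    finally show "\<bar>blinfun_apply g (blinfun_apply u x)\<bar> \<le> norm u" by simp
  next
    show "blinfun_apply g (blinfun_apply T x) = norm T" using g nT by simp
  qed
  have eq: "\<forall>S\<in>{S. compact_op S}. blinfun_apply g1 (blinfun_apply S x1) = blinfun_apply g2 (blinfun_apply S x2)"
    using sm sf[OF g1 x1(1)] sf[OF g2 x2(1)] unfolding smooth_point_in_def by blast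
  define c where "c = blinfun_apply g2 (blinfun_apply T x1)"
  have "\<forall>f::'a \<Rightarrow>\<^sub>L real. blinfun_apply f (x1 - c *\<^sub>R x2) = 0"
  proof
    fix f :: "'a \<Rightarrow>\<^sub>L real"
    have "blinfun_apply g1 (blinfun_apply (rank1 f (blinfun_apply T x1)) x1) =
          blinfun_apply g2 (blinfun_apply (rank1 f (blinfun_apply T x1)) x2)"
      using eq rank1_compact by blast
    hence "blinfun_apply f x1 = blinfun_apply f x2 * c"
      using g1 by (simp add: rank1_apply blinfun.scaleR_right c_def)
    thus "blinfun_apply f (x1 - c *\<^sub>R x2) = 0" by (simp add: blinfun.diff_right blinfun.scaleR_right)
  qed
  hence "x1 - c *\<^sub>R x2 = 0" using separate by blast
  hence xc: "x1 = c *\<^sub>R x2" by simp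
  hence "\<bar>c\<bar> = 1" using x1(1) x2(1) by simp
  hence "c = 1 \<or> c = -1" by linarith
  thus ?thesis using xc by auto
qed

lemma K:
  assumes xs: "\<forall>n. norm (xs n) = 1" and lim: "(\<lambda>n. norm (blinfun_apply T (xs n))) \<longlonglongrightarrow> 1"
  shows "\<exists>r x. strict_mono r \<and> norm x = 1 \<and> norm (blinfun_apply T x) = 1 \<and> (\<lambda>n. xs (r n)) \<longlonglongrightarrow> x"
proof -
  have "\<forall>n. blinfun_apply T (xs n) \<in> closure (blinfun_apply T ` cball 0 1)"
  proof
    fix n
    have "xs n \<in> cball 0 1" using xs by simp
    hence "blinfun_apply T (xs n) \<in> blinfun_apply T ` cball 0 1" by (rule imageI)
    thus "blinfun_apply T (xs n) \<in> closure (blinfun_apply T ` cball 0 1)" by (rule subsetD[OF closure_subset])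
  qed
  moreover have "seq_compact (closure (blinfun_apply T ` cball 0 1))"
    using cT unfolding compact_op_def by (rule compact_imp_seq_compact)
  ultimately obtain y r where r: "strict_mono r" and ly: "((\<lambda>n. blinfun_apply T (xs n)) \<circ> r) \<longlonglongrightarrow> y"
    unfolding seq_compact_def by meson
  define zs where "zs n = xs (r n)" for n
  have lz: "(\<lambda>n. blinfun_apply T (zs n)) \<longlonglongrightarrow> y" using ly by (simp add: zs_def o_def)
  have "(\<lambda>n. norm (blinfun_apply T (zs n))) \<longlonglongrightarrow> norm y" using tendsto_norm[OF lz] .
  moreover have "(\<lambda>n. norm (blinfun_apply T (zs n))) \<longlonglongrightarrow> 1"
    using LIMSEQ_subseq_LIMSEQ[OF lim r] by (simp add: zs_def o_def)
  ultimately have y1: "norm y = 1" using LIMSEQ_unique by blast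
  have zs1: "\<forall>n. norm (zs n) \<le> 1" using xs zs_def by simp
  obtain x where x: "norm x = 1" "blinfun_apply T x = y"
    using K1[OF zs1 lz y1] by blast
  have wk: "weakly_tendsto zs x" unfolding weakly_tendsto_def
  proof
    fix f :: "'a \<Rightarrow>\<^sub>L real"
    show "(\<lambda>n. blinfun_apply f (zs n)) \<longlonglongrightarrow> blinfun_apply f x"
    proof (rule ccontr)
      assume "\<not> ?thesis"
      then obtain e where e: "e > 0" and ne: "\<not> eventually (\<lambda>n. dist (blinfun_apply f (zs n)) (blinfun_apply f x) < e) sequentially"
        unfolding tendsto_iff by blast
      have "infinite {n. \<not> dist (blinfun_apply f (zs n)) (blinfun_apply f x) < e}"
        using ne unfolding cofinite_eq_sequentially[symmetric] eventually_cofinite by blast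
      then obtain r2 :: "nat \<Rightarrow> nat" where r2: "strict_mono r2"
        and r2S: "\<forall>n. \<not> dist (blinfun_apply f (zs (r2 n))) (blinfun_apply f x) < e"
        using infinite_enumerate by blast
      define ws where "ws n = zs (r2 n)" for n
      have lw: "(\<lambda>n. blinfun_apply T (ws n)) \<longlonglongrightarrow> y"
        using LIMSEQ_subseq_LIMSEQ[OF lz r2] by (simp add: ws_def o_def)
      have ws1: "\<forall>n. norm (ws n) \<le> 1" using zs1 ws_def by simp
      obtain x' where x': "norm x' = 1" "blinfun_apply T x' = y"
        "\<forall>f::'a \<Rightarrow>\<^sub>L real. ((\<lambda>n. blinfun_apply f (ws n)) \<longlongrightarrow> blinfun_apply f x') F"
        using K1[OF ws1 lw y1] by blast
      have "x' = x \<or> x' = - x" using U[of x x'] x x' y1 by simp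
      moreover have "x' \<noteq> - x"
      proof
        assume "x' = - x"
        hence "y = - y" using x x' by (simp add: blinfun.minus_right)
        hence "y + y = y + - y" by (rule arg_cong)
        hence "(2::real) *\<^sub>R y = 0" by (simp add: scaleR_2)
        hence "y = 0" by simp
        thus False using y1 by simp
      qed
      ultimately have "x' = x" by blast
      hence "((\<lambda>n. blinfun_apply f (ws n)) \<longlongrightarrow> blinfun_apply f x) F" using x'(3) by simp
      hence "eventually (\<lambda>n. dist (blinfun_apply f (ws n)) (blinfun_apply f x) < e) F"
        using e by (rule tendstoD)
      hence "eventually (\<lambda>n. False) F" by (rule eventually_mono) (use r2S ws_def in auto)
      thus False using nb by (simp add: trivial_limit_def)
    qed
  qed
  have "(\<lambda>n. norm (zs n)) \<longlonglongrightarrow> norm x" using xs x zs_def by simp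
  hence "(\<lambda>n. norm (zs n - x)) \<longlonglongrightarrow> 0" using kk[unfolded kadets_klee_def, rule_format, of zs x] wk by simp
  hence "zs \<longlonglongrightarrow> x" by (rule LIM_zero_cancel[OF tendsto_norm_zero_cancel])
  hence "(\<lambda>n. xs (r n)) \<longlonglongrightarrow> x" unfolding zs_def .
  moreover have "norm (blinfun_apply T x) = 1" using x y1 by simp
  ultimately show ?thesis using r x(1) by blast
qed

lemma exists_norming: "\<exists>x1. norm x1 = 1 \<and> norm (blinfun_apply T x1) = 1"
proof -
  have "\<forall>n. \<exists>x. norm x = 1 \<and> norm (blinfun_apply T x) > 1 - inverse (real (Suc n))"
    using approx_norming[OF nT] by simp
  then obtain xs where xs: "\<forall>n. norm (xs n) = 1 \<and> norm (blinfun_apply T (xs n)) > 1 - inverse (real (Suc n))"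
    by metis
  have "(\<lambda>n. 1 - inverse (real (Suc n))) \<longlonglongrightarrow> 1 - 0"
    by (intro tendsto_diff tendsto_const LIMSEQ_inverse_real_of_nat)
  hence "(\<lambda>n. norm (blinfun_apply T (xs n))) \<longlonglongrightarrow> 1"
  proof (rule_tac real_tendsto_sandwich[where f = "\<lambda>n. 1 - inverse (real (Suc n))" and h = "\<lambda>n. 1"])
    show "eventually (\<lambda>n. 1 - inverse (real (Suc n)) \<le> norm (blinfun_apply T (xs n))) sequentially"
      using xs by (intro always_eventually) (auto intro: less_imp_le)
    show "eventually (\<lambda>n. norm (blinfun_apply T (xs n)) \<le> 1) sequentially"
      using xs normT_le by (intro always_eventually) (metis)
  qed auto
  moreover have xs1: "\<forall>n. norm (xs n) = 1" using xs by blast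
  ultimately show ?thesis using K[OF xs1] by blast
qed

lemma uniform_near:
  assumes x1: "norm x1 = 1" "norm (blinfun_apply T x1) = 1" and ep: "\<epsilon> > 0"
  shows "\<exists>\<delta>>0. \<forall>x0. norm x0 = 1 \<and> norm (blinfun_apply T x0) > 1 - \<delta> \<longrightarrow>
            norm (x0 - x1) < \<epsilon> \<or> norm (x0 + x1) < \<epsilon>"
proof (rule ccontr)
  assume "\<not> ?thesis"
  hence "\<forall>n. \<exists>x. norm x = 1 \<and> norm (blinfun_apply T x) > 1 - inverse (real (Suc n)) \<and>
           \<not> norm (x - x1) < \<epsilon> \<and> \<not> norm (x + x1) < \<epsilon>"
    by (metis inverse_positive_iff_positive of_nat_0_less_iff zero_less_Suc)
  then obtain xs where xs: "\<forall>n. norm (xs n) = 1 \<and> norm (blinfun_apply T (xs n)) > 1 - inverse (real (Suc n)) \<and>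
           \<not> norm (xs n - x1) < \<epsilon> \<and> \<not> norm (xs n + x1) < \<epsilon>"
    by metis
  have "(\<lambda>n. 1 - inverse (real (Suc n))) \<longlonglongrightarrow> 1 - 0"
    by (intro tendsto_diff tendsto_const LIMSEQ_inverse_real_of_nat)
  hence "(\<lambda>n. norm (blinfun_apply T (xs n))) \<longlonglongrightarrow> 1"
  proof (rule_tac real_tendsto_sandwich[where f = "\<lambda>n. 1 - inverse (real (Suc n))" and h = "\<lambda>n. 1"])
    show "eventually (\<lambda>n. 1 - inverse (real (Suc n)) \<le> norm (blinfun_apply T (xs n))) sequentially"
      using xs by (intro always_eventually) (auto intro: less_imp_le)
    show "eventually (\<lambda>n. norm (blinfun_apply T (xs n)) \<le> 1) sequentially"
      using xs normT_le by (intro always_eventually) (metis)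
  qed auto
  moreover have xs1: "\<forall>n. norm (xs n) = 1" using xs by blast
  ultimately obtain r x where r: "strict_mono r" and x: "norm x = 1" "norm (blinfun_apply T x) = 1"
    and lx: "(\<lambda>n. xs (r n)) \<longlonglongrightarrow> x"
    using K[OF xs1] by blast
  have "(\<lambda>n. norm (xs (r n) - x)) \<longlonglongrightarrow> 0" using tendsto_norm_zero[OF LIM_zero[OF lx]] .
  hence "eventually (\<lambda>n. norm (xs (r n) - x) < \<epsilon>) sequentially"
    using ep by (rule order_tendstoD)
  then obtain N where N: "norm (xs (r N) - x) < \<epsilon>" unfolding eventually_sequentially by auto
  have "x = x1 \<or> x = - x1" using U[OF x1 x] .
  moreover have "\<not> norm (xs (r N) - x1) < \<epsilon>" "\<not> norm (xs (r N) + x1) < \<epsilon>" using xs by blast+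
  ultimately show False using N by auto
qed

end

theorem theorem2p6:
  fixes T :: "'a::banach \<Rightarrow>\<^sub>L 'b::banach" and \<epsilon> :: real
  assumes "reflexive_space TYPE('a)" and "kadets_klee TYPE('a)"
    and "dim_gt_one TYPE('a)" and "dim_gt_one TYPE('b)"
    and "compact_op T" and "norm T = 1"
    and "smooth_point_in {S. compact_op S} T"
    and "\<epsilon> > 0"
  shows "\<exists>A :: 'a \<Rightarrow>\<^sub>L 'b. uniform_BPB_approx T \<epsilon> A \<and> A \<noteq> T"
proof -
  obtain F :: "nat filter" where F: "F \<noteq> bot" "F \<le> sequentially"
    "\<forall>P. eventually P F \<or> eventually (\<lambda>n. \<not> P n) F"
    using ultra_exists by blast
  note ctx = assms(1,2,5,6,7) F
  obtain x1 where x1: "norm x1 = 1" "norm (blinfun_apply T x1) = 1"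
    using exists_norming[OF ctx] by blast
  obtain \<delta> where \<delta>: "\<delta> > 0" and \<delta>': "\<forall>x0. norm x0 = 1 \<and> norm (blinfun_apply T x0) > 1 - \<delta> \<longrightarrow>
            norm (x0 - x1) < \<epsilon> \<or> norm (x0 + x1) < \<epsilon>"
    using uniform_near[OF ctx x1 assms(8)] by blast
  have bpb: "uniform_BPB_approx T \<epsilon> A"
    if A: "norm A = 1" "norm (blinfun_apply A x1) = 1" "norm (A - T) < \<epsilon>" for A :: "'a \<Rightarrow>\<^sub>L 'b"
    unfolding uniform_BPB_approx_def
  proof (intro conjI exI[of _ \<delta>] allI impI)
    show "norm A = 1" by (rule A(1))
    show "\<delta> > 0" by (rule \<delta>)
    fix x0 :: 'a assume hx: "norm x0 = 1 \<and> 1 - \<delta> < norm (blinfun_apply T x0)"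
    have "norm (x0 - x1) < \<epsilon> \<or> norm (x0 + x1) < \<epsilon>" using \<delta>' hx by blast
    thus "\<exists>u0. norm u0 = 1 \<and> norm (blinfun_apply A u0) = 1 \<and> norm (u0 - x0) < \<epsilon> \<and> norm (A - T) < \<epsilon>"
    proof
      assume "norm (x0 - x1) < \<epsilon>"
      hence "norm (x1 - x0) < \<epsilon>" by (simp add: norm_minus_commute)
      thus ?thesis using A x1 by blast
    next
      assume "norm (x0 + x1) < \<epsilon>"
      hence "norm (- x1 - x0) < \<epsilon>" by (metis minus_diff_eq norm_minus_cancel diff_minus_eq_add add.commute)
      moreover have "norm (blinfun_apply A (- x1)) = 1" using A(2) by (simp add: blinfun.minus_right)
      moreover have "norm (- x1) = 1" using x1 by simp
      ultimately show ?thesis using A by blast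
    qed
  qed
  have normA1: "norm A = 1"
    if "\<And>x. norm (blinfun_apply A x) \<le> norm x" "norm (blinfun_apply A x1) = 1" for A :: "'a \<Rightarrow>\<^sub>L 'b"
  proof -
    have "norm A \<le> 1" by (rule norm_blinfun_bound) (use that(1) in auto)
    moreover have "norm (blinfun_apply A x1) \<le> norm A * norm x1" by (rule norm_blinfun)
    ultimately show ?thesis using that(2) x1 by simp
  qed
  obtain h :: "'a \<Rightarrow>\<^sub>L real" where h: "norm h \<le> 1" "blinfun_apply h x1 = norm x1"
    using hahn_banach_norming by blast
  have hx1: "blinfun_apply h x1 = 1" using h x1 by simp
  have habs: "\<bar>blinfun_apply h x\<bar> \<le> norm x" for x
  proof -
    have "\<bar>blinfun_apply h x\<bar> \<le> norm h * norm x" using norm_blinfun[of h x] by simp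
    also have "\<dots> \<le> 1 * norm x" using h(1) by (intro mult_right_mono) auto
    finally show ?thesis by simp
  qed
  define w where "w = blinfun_apply T x1"
  have w1: "norm w = 1" using x1 w_def by simp
  have nTle: "norm (blinfun_apply T x) \<le> norm x" for x using norm_blinfun[of T x] assms(6) by simp
  show ?thesis
  proof (cases "T = rank1 h w")
    case False
    define \<eta> where "\<eta> = min (1/2) (\<epsilon>/4)"
    have \<eta>: "\<eta> > 0" "\<eta> \<le> 1/2" "\<eta> \<le> \<epsilon>/4" using assms(8) \<eta>_def by auto
    define A where "A = (1 - \<eta>) *\<^sub>R T + \<eta> *\<^sub>R rank1 h w"
    have Aap: "blinfun_apply A x = (1 - \<eta>) *\<^sub>R blinfun_apply T x + \<eta> *\<^sub>R (blinfun_apply h x *\<^sub>R w)" for x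
      unfolding A_def by (simp add: rank1_apply blinfun.add_left blinfun.scaleR_left)
    have Ale: "norm (blinfun_apply A x) \<le> norm x" for x
    proof -
      have "norm (blinfun_apply A x) \<le> norm ((1 - \<eta>) *\<^sub>R blinfun_apply T x) + norm (\<eta> *\<^sub>R (blinfun_apply h x *\<^sub>R w))"
        unfolding Aap by (rule norm_triangle_ineq)
      also have "\<dots> = (1 - \<eta>) * norm (blinfun_apply T x) + \<eta> * \<bar>blinfun_apply h x\<bar>"
        using \<eta> w1 by (simp add: abs_mult)
      also have "\<dots> \<le> (1 - \<eta>) * norm x + \<eta> * norm x"
        using \<eta> nTle[of x] habs[of x] by (intro add_mono mult_left_mono) auto
      finally show ?thesis by (simp add: algebra_simps)
    qed
    have Ax1: "blinfun_apply A x1 = w" unfolding Aap hx1 w_def by (simp add: algebra_simps)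
    have nA: "norm A = 1" using normA1[OF Ale] Ax1 w1 by simp
    have AT: "A - T = \<eta> *\<^sub>R (rank1 h w - T)" unfolding A_def by (simp add: algebra_simps)
    have "norm (rank1 h w - T) \<le> norm (rank1 h w) + norm T" by (rule norm_triangle_ineq4)
    also have "norm (rank1 h w) \<le> 1" using rank1_norm[of h w] h(1) w1 by simp
    finally have "norm (rank1 h w - T) \<le> 2" using assms(6) by simp
    hence "norm (A - T) \<le> \<eta> * 2" unfolding AT using \<eta> by (simp add: mult_left_mono)
    hence nAT: "norm (A - T) < \<epsilon>" using \<eta> assms(8) by linarith
    have "A \<noteq> T"
    proof
      assume "A = T"
      hence "\<eta> *\<^sub>R (rank1 h w - T) = 0" using AT by simp
      hence "rank1 h w = T" using \<eta> by simp
      thus False using False by simp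
    qed
    thus ?thesis using bpb[OF nA _ nAT] Ax1 w1 by blast
  next
    case True
    obtain w' where w': "norm w' = 1" "w' \<noteq> w" "norm (w' - w) < \<epsilon>"
      using perturb_unit[OF assms(4) w1 assms(8)] by blast
    define A where "A = rank1 h w'"
    have Ax1: "blinfun_apply A x1 = w'" unfolding A_def by (simp add: rank1_apply hx1)
    have Ale: "norm (blinfun_apply A x) \<le> norm x" for x
      unfolding A_def using habs[of x] w'(1) by (simp add: rank1_apply)
    have nA: "norm A = 1" using normA1[OF Ale] Ax1 w'(1) by simp
    have AT: "A - T = rank1 h (w' - w)"
      by (rule blinfun_eqI) (simp add: A_def True rank1_apply blinfun.diff_left scaleR_diff_right)
    have "norm (A - T) \<le> norm h * norm (w' - w)" unfolding AT by (rule rank1_norm)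
    also have "\<dots> \<le> 1 * norm (w' - w)" using h(1) by (intro mult_right_mono) auto
    finally have nAT: "norm (A - T) < \<epsilon>" using w'(3) by simp
    have "A \<noteq> T"
    proof
      assume "A = T"
      hence "w' = w" using Ax1 w_def by simp
      thus False using w'(2) by simp
    qed
    thus ?thesis using bpb[OF nA _ nAT] Ax1 w'(1) by blast
  qed
qed

end
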